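(* Let $(a,b)$ be a coprime pair of positive integers, let $W=W_1\cdots W_N=W(a,b)$, let $n_L$ and $n_R$ be the numbers of letters $L$ and $R$ in $W$, and let the integers $a_j$ ($-n_R\le j\le n_L$, $j\neq 0$), $c$, and $\overline{a}_j$ ($-n_L\le j\le n_R$) be constructed as described in the context. Then \[(a_1,a_2,\dots,a_{n_L},\,c,\,a_{-n_R},\dots,a_{-2},a_{-1})=(\overline{a}_{-n_L},\dots,\overline{a}_0,\dots,\overline{a}_{n_R}).\]
   Context: Word: for coprime positive $(a,b)$, set $(a_0,b_0)=(a,b)$; if $a_i>b_i$ let $w_{i+1}=L$, $(a_{i+1},b_{i+1})=(a_i-b_i,b_i)$; if $a_i<b_i$ let $w_{i+1}=R$, $(a_{i+1},b_{i+1})=(a_i,b_i-a_i)$; stop at the first $N$ with $(a_N,b_N)=(1,1)$. Then $w(a,b)=w_1\cdots w_N$ and $W(a,b)=W_1\cdots W_N$ with $W_i=w_{N+1-i}$. First sequence: each $\{a^{(i)}_j\}$ is a finite integer sequence indexed by the consecutive integers $m(i)\le j\le M(i)$ (the minimal and maximal defined index). Start with $(a^{(0)}_{-1},a^{(0)}_0,a^{(0)}_1)=(-1,-1,-1)$. For $i=1,\dots,N$, always $a^{(i)}_0=-1$, and: if $W_i=R$, set $a^{(i)}_j=a^{(i-1)}_j$ for $1<j\le M(i-1)$, $a^{(i)}_1=a^{(i-1)}_1-1$, $a^{(i)}_{-1}=-2$, and $a^{(i)}_j=a^{(i-1)}_{j+1}$ for $m(i-1)-1\le j<-1$; if $W_i=L$,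 set $a^{(i)}_j=a^{(i-1)}_j$ for $m(i-1)\le j<-1$, $a^{(i)}_{-1}=a^{(i-1)}_{-1}-1$, $a^{(i)}_1=-2$, and $a^{(i)}_j=a^{(i-1)}_{j-1}$ for $1<j\le M(i-1)+1$. After $N$ steps the index range is $-(n_R+1)\le j\le n_L+1$; put $a_j=a^{(N)}_j$ for $-n_R\le j\le n_L$, $j\ne0$, and $c=a^{(N)}_{n_L+1}+a^{(N)}_{-(n_R+1)}-2$. Second sequence: each $\{\overline{a}^{(i)}_j\}$ is indexed by consecutive integers $m(i)\le j\le M(i)$. Start with $\overline{a}^{(0)}_0=-4$. If $W_i=R$: $\overline{a}^{(i)}_{M(i-1)+1}=-2$, $\overline{a}^{(i)}_{m(i-1)}=\overline{a}^{(i-1)}_{m(i-1)}-1$, and $\overline{a}^{(i)}_j=\overline{a}^{(i-1)}_j$ for $m(i-1)<j\le M(i-1)$. If $W_i=L$: $\overline{a}^{(i)}_{M(i-1)}=\overline{a}^{(i-1)}_{M(i-1)}-1$, $\overline{a}^{(i)}_{m(i-1)-1}=-2$, and $\overline{a}^{(i)}_j=\overline{a}^{(i-1)}_j$ for $m(i-1)\le j<M(i-1)$. Put $\overline{a}_j=\overline{a}^{(N)}_j$, $-n_L\le j\le n_R$. *)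

theory Defs
  imports Main
begin

datatype letter = L | R

text \<open>The word w(a,b): subtractive Euclidean algorithm, stopping at (1,1).
  (The guards for zero / equal entries only matter outside the coprime positive case.)\<close>
function word :: "nat \<Rightarrow> nat \<Rightarrow> letter list" where
  "word a b =
     (if a = 0 \<or> b = 0 \<or> (a = 1 \<and> b = 1) then []
      else if b < a then L # word (a - b) b
      else if a < b then R # word a (b - a)
      else [])"
  by pat_completeness auto
termination by (relation "measure (\<lambda>(a, b). a + b)") auto

definition Word :: "nat \<Rightarrow> nat \<Rightarrow> letter list" where
  "Word a b = rev (word a b)"

text \<open>A finite integer sequence indexed by m \<le> j \<le> M, stored as (m, M, values).
  Values outside the index range are irrelevant (set to 0).\<close>
type_synonym iseq = "int \<times> int \<times> (int \<Rightarrow> int)"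

definition seq1_init :: iseq where
  "seq1_init = (-1, 1, (\<lambda>j. if -1 \<le> j \<and> j \<le> 1 then -1 else 0))"

fun seq1_step :: "iseq \<Rightarrow> letter \<Rightarrow> iseq" where
  "seq1_step (m, M, f) R =
     (m - 1, M, (\<lambda>j. if j = 0 then -1
                    else if 1 < j \<and> j \<le> M then f j
                    else if j = 1 then f 1 - 1
                    else if j = -1 then -2
                    else if m - 1 \<le> j \<and> j < -1 then f (j + 1)
                    else 0))"
| "seq1_step (m, M, f) L =
     (m, M + 1, (\<lambda>j. if j = 0 then -1
                    else if m \<le> j \<and> j < -1 then f j
                    else if j = -1 then f (-1) - 1
                    else if j = 1 then -2
                    else if 1 < j \<and> j \<le> M + 1 then f (j - 1)
                    else 0))"

definition seq1 :: "letter list \<Rightarrow> iseq" where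
  "seq1 W = foldl seq1_step seq1_init W"

definition seq2_init :: iseq where
  "seq2_init = (0, 0, (\<lambda>j. if j = 0 then -4 else 0))"

fun seq2_step :: "iseq \<Rightarrow> letter \<Rightarrow> iseq" where
  "seq2_step (m, M, f) R =
     (m, M + 1, (\<lambda>j. if j = M + 1 then -2
                    else if j = m then f m - 1
                    else if m < j \<and> j \<le> M then f j
                    else 0))"
| "seq2_step (m, M, f) L =
     (m - 1, M, (\<lambda>j. if j = M then f M - 1
                    else if j = m - 1 then -2
                    else if m \<le> j \<and> j < M then f j
                    else 0))"

definition seq2 :: "letter list \<Rightarrow> iseq" where
  "seq2 W = foldl seq2_step seq2_init W"

definition nL :: "letter list \<Rightarrow> nat" where
  "nL W = length (filter (\<lambda>x. x = L) W)"

definition nR :: "letter list \<Rightarrow> nat" where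
  "nR W = length (filter (\<lambda>x. x = R) W)"

end

theory Submission
  imports Defs
begin

lemma inv:
  "seq1 W = (m,M,f) \<Longrightarrow> seq2 W = (m2,M2,g) \<Longrightarrow>
   m = -(int (nR W)+1) \<and> M = int (nL W)+1 \<and> m2 = - int (nL W) \<and> M2 = int (nR W) \<and>
   (\<forall>j. 1\<le>j \<and> j\<le>int (nL W) \<longrightarrow> g (j - int (nL W) - 1) = f j) \<and>
   g 0 = f (int (nL W)+1) + f (-(int (nR W)+1)) - 2 \<and>
   (\<forall>j. - int (nR W)\<le>j \<and> j\<le> -1 \<longrightarrow> g (j + int (nR W) + 1) = f j)"
proof (induction W arbitrary: m M f m2 M2 g rule: rev_induct)
  case Nil
  then show ?case by (auto simp: seq1_def seq2_def seq1_init_def seq2_init_def nL_def nR_def)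
next
  case (snoc x W)
  obtain m0 M0 f0 where s1: "seq1 W = (m0,M0,f0)" by (cases "seq1 W") auto
  obtain m20 M20 g0 where s2: "seq2 W = (m20,M20,g0)" by (cases "seq2 W") auto
  note IH = snoc.IH[OF s1 s2]
  define l where "l = int (nL W)"
  define r where "r = int (nR W)"
  have l0: "l \<ge> 0" "r \<ge> 0" by (auto simp: l_def r_def)
  have e1: "seq1 (W@[x]) = seq1_step (m0,M0,f0) x" using s1 by (simp add: seq1_def)
  have e2: "seq2 (W@[x]) = seq2_step (m20,M20,g0) x" using s2 by (simp add: seq2_def)
  have I1: "m0 = -(r+1)" "M0 = l+1" "m20 = -l" "M20 = r" using IH by (auto simp: l_def r_def)
  have I2: "\<And>j. 1\<le>j \<Longrightarrow> j\<le>l \<Longrightarrow> g0 (j - l - 1) = f0 j" using IH by (auto simp: l_def r_def)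
  have I3: "g0 0 = f0 (l+1) + f0 (-(r+1)) - 2" using IH by (auto simp: l_def r_def)
  have I4: "\<And>j. -r\<le>j \<Longrightarrow> j\<le> -1 \<Longrightarrow> g0 (j + r + 1) = f0 j" using IH by (auto simp: l_def r_def)
  show ?case
  proof (cases x)
    case L
    have nl: "int (nL (W@[x])) = l + 1" "int (nR (W@[x])) = r" using L by (auto simp: nL_def nR_def l_def r_def)
    have F: "m = m0" "M = M0 + 1" "f = (\<lambda>j. if j = 0 then -1
                    else if m0 \<le> j \<and> j < -1 then f0 j
                    else if j = -1 then f0 (-1) - 1
                    else if j = 1 then -2
                    else if 1 < j \<and> j \<le> M0 + 1 then f0 (j - 1)
                    else 0)" using snoc.prems(1) e1 L by auto
    have G: "m2 = m20 - 1" "M2 = M20" "g = (\<lambda>j. if j = M20 then g0 M20 - 1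
                    else if j = m20 - 1 then -2
                    else if m20 \<le> j \<and> j < M20 then g0 j
                    else 0)" using snoc.prems(2) e2 L by auto
    have A: "\<forall>j. 1\<le>j \<and> j\<le>l+1 \<longrightarrow> g (j - (l+1) - 1) = f j"
    proof (intro allI impI)
      fix j assume j: "1\<le>j \<and> j\<le>l+1"
      show "g (j - (l+1) - 1) = f j"
      proof (cases "j = 1")
        case True then show ?thesis using l0 unfolding F G I1 by simp
      next
        case False
        then show ?thesis using l0 j I2[of "j-1"] unfolding F G I1 by simp
      qed
    qed
    have B: "g 0 = f (l+1+1) + f (-(r+1)) - 2"
    proof (cases "r = 0")
      case True then show ?thesis using l0 I3 unfolding F G I1 by (simp add: algebra_simps)
    next
      case False then show ?thesis using l0 I3 unfolding F G I1 by (simp add: algebra_simps)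
    qed
    have C: "\<forall>j. -r\<le>j \<and> j\<le> -1 \<longrightarrow> g (j + r + 1) = f j"
    proof (intro allI impI)
      fix j assume j: "-r\<le>j \<and> j\<le> -1"
      show "g (j + r + 1) = f j"
      proof (cases "j = -1")
        case True then show ?thesis using l0 j I4[of j] unfolding F G I1 by simp
      next
        case False
        then show ?thesis using l0 j I4[of j] unfolding F G I1 by simp
      qed
    qed
    show ?thesis unfolding nl using A B C F(1,2) G(1,2) I1 by simp
  next
    case R
    have nl: "int (nL (W@[x])) = l" "int (nR (W@[x])) = r + 1" using R by (auto simp: nL_def nR_def l_def r_def)
    have F: "m = m0 - 1" "M = M0" "f = (\<lambda>j. if j = 0 then -1
                    else if 1 < j \<and> j \<le> M0 then f0 j
                    else if j = 1 then f0 1 - 1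
                    else if j = -1 then -2
                    else if m0 - 1 \<le> j \<and> j < -1 then f0 (j + 1)
                    else 0)" using snoc.prems(1) e1 R by auto
    have G: "m2 = m20" "M2 = M20 + 1" "g = (\<lambda>j. if j = M20 + 1 then -2
                    else if j = m20 then g0 m20 - 1
                    else if m20 < j \<and> j \<le> M20 then g0 j
                    else 0)" using snoc.prems(2) e2 R by auto
    have A: "\<forall>j. 1\<le>j \<and> j\<le>l \<longrightarrow> g (j - l - 1) = f j"
    proof (intro allI impI)
      fix j assume j: "1\<le>j \<and> j\<le>l"
      show "g (j - l - 1) = f j"
      proof (cases "j = 1")
        case True then show ?thesis using l0 j I2[of j] unfolding F G I1 by simp
      next
        case False
        then show ?thesis using l0 j I2[of j] unfolding F G I1 by simp
      qed
    qed
    have B: "g 0 = f (l+1) + f (-(r+1+1)) - 2"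
    proof (cases "l = 0")
      case True then show ?thesis using l0 I3 unfolding F G I1 by (simp add: algebra_simps)
    next
      case False then show ?thesis using l0 I3 unfolding F G I1 by (simp add: algebra_simps)
    qed
    have C: "\<forall>j. -(r+1)\<le>j \<and> j\<le> -1 \<longrightarrow> g (j + (r+1) + 1) = f j"
    proof (intro allI impI)
      fix j assume j: "-(r+1)\<le>j \<and> j\<le> -1"
      show "g (j + (r+1) + 1) = f j"
      proof (cases "j = -1")
        case True then show ?thesis using l0 unfolding F G I1 by simp
      next
        case False
        then show ?thesis using l0 j I4[of "j+1"] unfolding F G I1 by (simp add: algebra_simps)
      qed
    qed
    show ?thesis unfolding nl using A B C F(1,2) G(1,2) I1 by simp
  qed
qed

theorem lemma2p4:
  fixes a b :: nat
  assumes "0 < a" and "0 < b" and "coprime a b"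
  defines "W \<equiv> Word a b"
  defines "n\<^sub>L \<equiv> int (nL W)" and "n\<^sub>R \<equiv> int (nR W)"
  defines "A \<equiv> snd (snd (seq1 W))" and "Abar \<equiv> snd (snd (seq2 W))"
  defines "c \<equiv> A (n\<^sub>L + 1) + A (- (n\<^sub>R + 1)) - 2"
  shows "map A [1..n\<^sub>L] @ [c] @ map A [- n\<^sub>R..-1] = map Abar [- n\<^sub>L..n\<^sub>R]"
proof -
  obtain m M f where s1: "seq1 W = (m,M,f)" by (cases "seq1 W") auto
  obtain m2 M2 g where s2: "seq2 W = (m2,M2,g)" by (cases "seq2 W") auto
  note I = inv[OF s1 s2, folded n\<^sub>L_def n\<^sub>R_def]
  have Af: "A = f" "Abar = g" using s1 s2 by (auto simp: A_def Abar_def)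
  have l0: "n\<^sub>L \<ge> 0" "n\<^sub>R \<ge> 0" by (auto simp: n\<^sub>L_def n\<^sub>R_def)
  have I2: "\<And>j. 1\<le>j \<Longrightarrow> j\<le>n\<^sub>L \<Longrightarrow> g (j - n\<^sub>L - 1) = f j" using I by auto
  have I3: "g 0 = f (n\<^sub>L+1) + f (-(n\<^sub>R+1)) - 2" using I by auto
  have I4: "\<And>j. -n\<^sub>R\<le>j \<Longrightarrow> j\<le> -1 \<Longrightarrow> g (j + n\<^sub>R + 1) = f j" using I by auto
  show ?thesis
  proof (rule nth_equalityI)
    show "length (map A [1..n\<^sub>L] @ [c] @ map A [- n\<^sub>R..-1]) = length (map Abar [- n\<^sub>L..n\<^sub>R])"
      using l0 by simp
  next
    fix k assume k: "k < length (map A [1..n\<^sub>L] @ [c] @ map A [- n\<^sub>R..-1])"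
    hence k': "int k < n\<^sub>L + n\<^sub>R + 1" using l0 by simp
    have R: "map Abar [- n\<^sub>L..n\<^sub>R] ! k = g (- n\<^sub>L + int k)"
      using k' Af by (simp add: nth_upto)
    consider "int k < n\<^sub>L" | "int k = n\<^sub>L" | "int k > n\<^sub>L" by linarith
    then show "(map A [1..n\<^sub>L] @ [c] @ map A [- n\<^sub>R..-1]) ! k = map Abar [- n\<^sub>L..n\<^sub>R] ! k"
    proof cases
      case 1
      have kl: "k < nat n\<^sub>L" using 1 by linarith
      have "(map A [1..n\<^sub>L] @ [c] @ map A [- n\<^sub>R..-1]) ! k = f (1 + int k)"
        using kl 1 Af by (simp add: nth_append nth_upto)
      then show ?thesis using R I2[of "1 + int k"] 1 by simp
    next
      case 2
      have "(map A [1..n\<^sub>L] @ [c] @ map A [- n\<^sub>R..-1]) ! k = c"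
      proof -
        have "length (map A [1..n\<^sub>L]) = k" using 2 by simp
        then show ?thesis by (metis append_Cons nth_append_length)
      qed
      then show ?thesis using R I3 2 Af unfolding c_def by simp
    next
      case 3
      define i where "i = k - nat n\<^sub>L - 1"
      have ki: "k = nat n\<^sub>L + 1 + i" using 3 l0 unfolding i_def by linarith
      have ir: "int i < n\<^sub>R" using k' ki l0 by linarith
      have "(map A [1..n\<^sub>L] @ [c] @ map A [- n\<^sub>R..-1]) ! k = f (- n\<^sub>R + int i)"
        using ki ir l0 Af by (simp add: nth_append nth_upto)
      then show ?thesis using R I4[of "- n\<^sub>R + int i"] ki ir l0 by (simp add: algebra_simps)
    qed
  qed
qed

end
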